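(* Let $\mathcal{P}_{\mathrm{con}}$, $\mathcal{Q}_{\mathrm{con}}$ and $\mathcal{R}_{\mathrm{con}}$ denote the sets of isomorphism classes of finite connected permutation racks, finite connected quandles, and finite connected racks, respectively. The cartesian product induces a well-defined injective map $$\mathcal{P}_{\mathrm{con}}\times\mathcal{Q}_{\mathrm{con}}\longrightarrow\mathcal{R}_{\mathrm{con}},\qquad([C],[Q])\longmapsto[C\times Q].$$
   Context: A rack is a set $R$ with a binary operation $\rhd$ such that every left multiplication $\ell_a\colon b\mapsto a\rhd b$ is a bijection and $a\rhd(b\rhd c)=(a\rhd b)\rhd(a\rhd c)$ for all $a,b,c$; a quandle is a rack with $a\rhd a=a$ for all $a$. A permutation rack is a set $R$ with a permutation $\pi$ of $R$ and operation $a\rhd b=\pi(b)$ for all $a,b$. The product of racks is the cartesian product with componentwise operation. The inner automorphism group $\mathrm{Inn}(R)$ is the subgroup of the symmetric group on $R$ generated by all $\ell_a$; a rack is connected if it is non-empty and $\mathrm{Inn}(R)$ acts transitively on $R$. *)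

theory Defs
  imports "HOL-Algebra.Bij" "HOL-Algebra.Generated_Groups"
begin

definition rack :: "'a set \<Rightarrow> ('a \<Rightarrow> 'a \<Rightarrow> 'a) \<Rightarrow> bool" where
  "rack R op \<longleftrightarrow>
     (\<forall>a\<in>R. \<forall>b\<in>R. op a b \<in> R) \<and>
     (\<forall>a\<in>R. bij_betw (op a) R R) \<and>
     (\<forall>a\<in>R. \<forall>b\<in>R. \<forall>c\<in>R. op a (op b c) = op (op a b) (op a c))"

definition quandle :: "'a set \<Rightarrow> ('a \<Rightarrow> 'a \<Rightarrow> 'a) \<Rightarrow> bool" where
  "quandle R op \<longleftrightarrow> rack R op \<and> (\<forall>a\<in>R. op a a = a)"

definition perm_rack :: "'a set \<Rightarrow> ('a \<Rightarrow> 'a \<Rightarrow> 'a) \<Rightarrow> bool" where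
  "perm_rack R op \<longleftrightarrow>
     (\<exists>\<pi>. bij_betw \<pi> R R \<and> (\<forall>a\<in>R. \<forall>b\<in>R. op a b = \<pi> b))"

definition Inn :: "'a set \<Rightarrow> ('a \<Rightarrow> 'a \<Rightarrow> 'a) \<Rightarrow> ('a \<Rightarrow> 'a) set" where
  "Inn R op = generate (BijGroup R) ((\<lambda>a. restrict (op a) R) ` R)"

definition rack_connected :: "'a set \<Rightarrow> ('a \<Rightarrow> 'a \<Rightarrow> 'a) \<Rightarrow> bool" where
  "rack_connected R op \<longleftrightarrow> R \<noteq> {} \<and> (\<forall>x\<in>R. \<forall>y\<in>R. \<exists>g\<in>Inn R op. g x = y)"

definition prod_op :: "('a \<Rightarrow> 'a \<Rightarrow> 'a) \<Rightarrow> ('b \<Rightarrow> 'b \<Rightarrow> 'b) \<Rightarrow> ('a \<times> 'b) \<Rightarrow> ('a \<times> 'b) \<Rightarrow> ('a \<times> 'b)" where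
  "prod_op op1 op2 = (\<lambda>(a, b) (c, d). (op1 a c, op2 b d))"

definition rack_iso :: "'a set \<Rightarrow> ('a \<Rightarrow> 'a \<Rightarrow> 'a) \<Rightarrow> 'b set \<Rightarrow> ('b \<Rightarrow> 'b \<Rightarrow> 'b) \<Rightarrow> bool" where
  "rack_iso R1 op1 R2 op2 \<longleftrightarrow>
     (\<exists>f. bij_betw f R1 R2 \<and> (\<forall>a\<in>R1. \<forall>b\<in>R1. f (op1 a b) = op2 (f a) (f b)))"

end

theory Submission
  imports Defs
begin

lemma rack_gen_Bij:
  assumes "rack R op" "a \<in> R"
  shows "restrict (op a) R \<in> Bij R"
  using assms unfolding rack_def Bij_def
  by (auto intro: bij_betw_cong[THEN iffD1, rotated])

lemma Inn_invariant:
  assumes r: "rack R op" and k: "\<forall>a\<in>R. \<forall>x\<in>R. k (op a x) = k x"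
    and g: "g \<in> Inn R op"
  shows "g \<in> Bij R \<and> (\<forall>x\<in>R. k (g x) = k x)"
  using g unfolding Inn_def
proof (induction g rule: generate.induct)
  case one
  then show ?case using id_Bij[of R] by (simp add: BijGroup_def restrict_def)
next
  case (incl h)
  then obtain a where a: "a \<in> R" "h = restrict (op a) R" by auto
  have "\<forall>x\<in>R. k (h x) = k x" using a k by auto
  then show ?case using rack_gen_Bij[OF r a(1)] a(2) by blast
next
  case (inv h)
  then obtain a where a: "a \<in> R" "h = restrict (op a) R" by auto
  have hB: "h \<in> Bij R" using rack_gen_Bij[OF r a(1)] a by simp
  have "\<forall>x\<in>R. k (inv_into R h x) = k x"
  proof
    fix x assume x: "x \<in> R"
    have bb: "bij_betw h R R" using hB unfolding Bij_def by auto
    have z: "inv_into R h x \<in> R" using Bij_inv_into_mem[OF hB x] .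
    have hz: "h (inv_into R h x) = x" using bb x by (simp add: bij_betw_def f_inv_into_f)
    have "k (h (inv_into R h x)) = k (inv_into R h x)" using a z k by auto
    then show "k (inv_into R h x) = k x" using hz by simp
  qed
  then have "\<forall>x\<in>R. k ((inv\<^bsub>BijGroup R\<^esub> h) x) = k x" using inv_BijGroup[OF hB] by simp
  moreover have "inv\<^bsub>BijGroup R\<^esub> h \<in> Bij R" using inv_BijGroup[OF hB] restrict_inv_into_Bij[OF hB] by metis
  ultimately show ?case by blast
next
  case (eng h1 h2)
  have m: "h1 \<otimes>\<^bsub>BijGroup R\<^esub> h2 = compose R h1 h2" using eng by (simp add: BijGroup_def)
  have "\<forall>x\<in>R. h2 x \<in> R" using eng unfolding Bij_def bij_betw_def by auto
  then show ?case using eng m compose_Bij by (auto simp: compose_eq)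
qed

lemma connected_invariant:
  assumes r: "rack R op" and c: "rack_connected R op"
    and k: "\<forall>a\<in>R. \<forall>x\<in>R. k (op a x) = k x" and x: "x \<in> R" and y: "y \<in> R"
  shows "k x = k y"
proof -
  obtain g where "g \<in> Inn R op" "g x = y" using c x y unfolding rack_connected_def by blast
  then show ?thesis using Inn_invariant[OF r k] x by metis
qed

lemma Inn_Bij: "rack R op \<Longrightarrow> g \<in> Inn R op \<Longrightarrow> g \<in> Bij R"
  using Inn_invariant[where k="\<lambda>_. True"] by blast

lemma orbit_fwd:
  assumes r: "rack R op" and p: "p \<in> R" and g: "g \<in> Inn R op" and x0: "x0 \<in> R"
  shows "\<exists>g'\<in>Inn R op. g' x0 = op p (g x0)"
proof -
  have gB: "g \<in> Bij R" using Inn_Bij[OF r g] .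
  have gen: "restrict (op p) R \<in> Inn R op" unfolding Inn_def using p by (auto intro: generate.incl)
  have "restrict (op p) R \<otimes>\<^bsub>BijGroup R\<^esub> g \<in> Inn R op"
    using gen g unfolding Inn_def by (rule generate.eng)
  moreover have "g x0 \<in> R" using gB x0 unfolding Bij_def bij_betw_def by auto
  moreover have "restrict (op p) R \<otimes>\<^bsub>BijGroup R\<^esub> g = compose R (restrict (op p) R) g"
    using gB rack_gen_Bij[OF r p] by (simp add: BijGroup_def)
  ultimately show ?thesis using x0 by (metis compose_eq restrict_apply')
qed

lemma orbit_bwd:
  assumes r: "rack R op" and p: "p \<in> R" and g: "g \<in> Inn R op" and x0: "x0 \<in> R"
  shows "\<exists>g'\<in>Inn R op. g' x0 = inv_into R (op p) (g x0)"
proof -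
  have gB: "g \<in> Bij R" using Inn_Bij[OF r g] .
  have hB: "restrict (op p) R \<in> Bij R" using rack_gen_Bij[OF r p] .
  have gen: "inv\<^bsub>BijGroup R\<^esub> (restrict (op p) R) \<in> Inn R op" unfolding Inn_def using p
    by (auto intro: generate.inv)
  have iv: "inv\<^bsub>BijGroup R\<^esub> (restrict (op p) R) = (\<lambda>x\<in>R. inv_into R (restrict (op p) R) x)"
    using inv_BijGroup[OF hB] .
  have ivB: "inv\<^bsub>BijGroup R\<^esub> (restrict (op p) R) \<in> Bij R" using iv restrict_inv_into_Bij[OF hB] by simp
  have "inv\<^bsub>BijGroup R\<^esub> (restrict (op p) R) \<otimes>\<^bsub>BijGroup R\<^esub> g \<in> Inn R op"
    using gen g unfolding Inn_def by (rule generate.eng)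
  moreover have gx: "g x0 \<in> R" using gB x0 unfolding Bij_def bij_betw_def by auto
  moreover have "inv\<^bsub>BijGroup R\<^esub> (restrict (op p) R) \<otimes>\<^bsub>BijGroup R\<^esub> g
     = compose R (inv\<^bsub>BijGroup R\<^esub> (restrict (op p) R)) g"
    using gB ivB by (simp add: BijGroup_def)
  moreover have "inv_into R (restrict (op p) R) (g x0) = inv_into R (op p) (g x0)"
    unfolding inv_into_def by (rule arg_cong[where f=Eps]) auto
  ultimately show ?thesis using x0 gx iv by (metis compose_eq restrict_apply')
qed

lemma prod_op_simp[simp]: "prod_op o1 o2 (a, b) (c, d) = (o1 a c, o2 b d)"
  by (simp add: prod_op_def)

lemma prod_rack:
  assumes "rack C c" "rack Q q"
  shows "rack (C \<times> Q) (prod_op c q)"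
proof -
  have "bij_betw (prod_op c q p) (C \<times> Q) (C \<times> Q)" if p: "p \<in> C \<times> Q" for p
  proof -
    obtain a b where ab: "p = (a, b)" "a \<in> C" "b \<in> Q" using p by auto
    have "bij_betw (map_prod (c a) (q b)) (C \<times> Q) (C \<times> Q)"
    proof (rule bij_betw_map_prod)
      show "bij_betw (c a) C C" using assms(1) ab(2) unfolding rack_def by blast
      show "bij_betw (q b) Q Q" using assms(2) ab(3) unfolding rack_def by blast
    qed
    moreover have "prod_op c q p = map_prod (c a) (q b)" using ab(1) by (simp add: prod_op_def fun_eq_iff split_beta)
    ultimately show ?thesis by simp
  qed
  moreover have "prod_op c q p p' \<in> C \<times> Q" if "p \<in> C \<times> Q" "p' \<in> C \<times> Q" for p p'
  proof -
    have "\<forall>a\<in>C. \<forall>b\<in>C. c a b \<in> C" "\<forall>a\<in>Q. \<forall>b\<in>Q. q a b \<in> Q"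
      using assms unfolding rack_def by blast+
    then show ?thesis using that by (cases p, cases p') simp
  qed
  moreover have "prod_op c q p (prod_op c q p' p'') = prod_op c q (prod_op c q p p') (prod_op c q p p'')"
    if pp: "p \<in> C \<times> Q" "p' \<in> C \<times> Q" "p'' \<in> C \<times> Q" for p p' p''
  proof -
    obtain a b where "p = (a, b)" "a \<in> C" "b \<in> Q" using pp(1) by blast
    moreover obtain a' b' where "p' = (a', b')" "a' \<in> C" "b' \<in> Q" using pp(2) by blast
    moreover obtain a'' b'' where "p'' = (a'', b'')" "a'' \<in> C" "b'' \<in> Q" using pp(3) by blast
    moreover have "\<forall>a\<in>C. \<forall>b\<in>C. \<forall>d\<in>C. c a (c b d) = c (c a b) (c a d)"
      "\<forall>a\<in>Q. \<forall>b\<in>Q. \<forall>d\<in>Q. q a (q b d) = q (q a b) (q a d)"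
      using assms unfolding rack_def by blast+
    ultimately show ?thesis by simp
  qed
  ultimately show ?thesis unfolding rack_def by blast
qed

lemma prod_connected_aux:
  assumes rC: "rack C c" and pC: "perm_rack C c" and cC: "rack_connected C c"
    and qQ: "quandle Q q" and cQ: "rack_connected Q q"
    and x0: "x0 \<in> C" and y0: "y0 \<in> Q" and xx: "xx \<in> C" and yy: "yy \<in> Q"
  shows "\<exists>g\<in>Inn (C \<times> Q) (prod_op c q). g (x0, y0) = (xx, yy)"
proof -
  have rQ: "rack Q q" using qQ unfolding quandle_def by auto
  have idQ: "\<And>y. y \<in> Q \<Longrightarrow> q y y = y" using qQ unfolding quandle_def by auto
  obtain \<pi> where pi: "bij_betw \<pi> C C" "\<forall>a\<in>C. \<forall>b\<in>C. c a b = \<pi> b"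
    using pC unfolding perm_rack_def by auto
  define R where "R = C \<times> Q"
  define op where "op = prod_op c q"
  have rR: "rack R op" unfolding R_def op_def using prod_rack[OF rC rQ] .
  define Orb where "Orb = (\<lambda>p. \<exists>g\<in>Inn R op. g (x0, y0) = p)"
  have p0R: "(x0, y0) \<in> R" using x0 y0 R_def by auto
  have cl1: "Orb (x, y) = Orb (\<pi> x, y)" if x: "x \<in> C" and y: "y \<in> Q" for x y
  proof
    assume "Orb (x, y)"
    then obtain g where g: "g \<in> Inn R op" "g (x0, y0) = (x, y)" unfolding Orb_def by auto
    have "op (x, y) (x, y) = (\<pi> x, y)" using pi x y idQ unfolding op_def by auto
    then show "Orb (\<pi> x, y)" using orbit_fwd[OF rR _ g(1) p0R, of "(x, y)"] g x y R_def Orb_def by auto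
  next
    assume "Orb (\<pi> x, y)"
    then obtain g where g: "g \<in> Inn R op" "g (x0, y0) = (\<pi> x, y)" unfolding Orb_def by auto
    have e: "op (x, y) (x, y) = (\<pi> x, y)" using pi x y idQ unfolding op_def by auto
    have "inj_on (op (x, y)) R" using rR x y unfolding rack_def bij_betw_def R_def by auto
    then have "inv_into R (op (x, y)) (\<pi> x, y) = (x, y)" using e x y R_def
      by (metis inv_into_f_f mem_Sigma_iff)
    then show "Orb (x, y)" using orbit_bwd[OF rR _ g(1) p0R, of "(x, y)"] g x y R_def Orb_def by auto
  qed
  have cl2: "Orb (x, q a y) = Orb (x, y)" if x: "x \<in> C" and y: "y \<in> Q" and a: "a \<in> Q" for x y a
  proof -
    have qa: "q a y \<in> Q" using rQ a y unfolding rack_def by auto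
    have e: "op (x, a) (x, y) = (\<pi> x, q a y)" using pi x unfolding op_def by auto
    have "Orb (x, y) = Orb (\<pi> x, q a y)"
    proof
      assume "Orb (x, y)"
      then obtain g where g: "g \<in> Inn R op" "g (x0, y0) = (x, y)" unfolding Orb_def by auto
      then show "Orb (\<pi> x, q a y)" using orbit_fwd[OF rR _ g(1) p0R, of "(x, a)"] e x a R_def Orb_def by auto
    next
      assume "Orb (\<pi> x, q a y)"
      then obtain g where g: "g \<in> Inn R op" "g (x0, y0) = (\<pi> x, q a y)" unfolding Orb_def by auto
      have "inj_on (op (x, a)) R" using rR x a unfolding rack_def bij_betw_def R_def by auto
      then have "inv_into R (op (x, a)) (\<pi> x, q a y) = (x, y)" using e x y R_def
        by (metis inv_into_f_f mem_Sigma_iff)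
      then show "Orb (x, y)" using orbit_bwd[OF rR _ g(1) p0R, of "(x, a)"] g x a R_def Orb_def by auto
    qed
    then show ?thesis using cl1[OF x qa] by simp
  qed
  have O0: "Orb (x0, y0)"
  proof -
    have "\<one>\<^bsub>BijGroup R\<^esub> \<in> Inn R op" unfolding Inn_def by (rule generate.one)
    moreover have "\<one>\<^bsub>BijGroup R\<^esub> (x0, y0) = (x0, y0)" using p0R by (simp add: BijGroup_def)
    ultimately show ?thesis unfolding Orb_def by blast
  qed
  have Ox: "Orb (x, y0)" if x: "x \<in> C" for x
  proof -
    have "(\<lambda>x. Orb (x, y0)) x = (\<lambda>x. Orb (x, y0)) x0"
      by (rule connected_invariant[OF rC cC _ x x0]) (use pi cl1 y0 in auto)
    then show ?thesis using O0 by simp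
  qed
  have Oall: "Orb (x, y)" if x: "x \<in> C" and y: "y \<in> Q" for x y
  proof -
    have "(\<lambda>y. Orb (x, y)) y = (\<lambda>y. Orb (x, y)) y0"
      by (rule connected_invariant[OF rQ cQ _ y y0]) (use cl2 x in auto)
    then show ?thesis using Ox[OF x] by simp
  qed
  show ?thesis using Oall[OF xx yy] unfolding Orb_def R_def op_def by simp
qed


lemma prod_connected:
  assumes rC: "rack C c" and pC: "perm_rack C c" and cC: "rack_connected C c"
    and qQ: "quandle Q q" and cQ: "rack_connected Q q"
  shows "rack_connected (C \<times> Q) (prod_op c q)"
  unfolding rack_connected_def
proof (intro conjI ballI)
  show "C \<times> Q \<noteq> {}" using cC cQ unfolding rack_connected_def by auto
next
  fix p p' assume p: "p \<in> C \<times> Q" and p': "p' \<in> C \<times> Q"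
  then show "\<exists>g\<in>Inn (C \<times> Q) (prod_op c q). g p = p'"
    using prod_connected_aux[OF assms] by (cases p, cases p') simp
qed

lemma iso_inv:
  assumes r: "rack A o1" and f: "bij_betw f A B" and h: "\<forall>a\<in>A. \<forall>b\<in>A. f (o1 a b) = o2 (f a) (f b)"
  shows "bij_betw (inv_into A f) B A \<and> (\<forall>u\<in>B. \<forall>v\<in>B. inv_into A f (o2 u v) = o1 (inv_into A f u) (inv_into A f v))"
proof (intro conjI ballI)
  show "bij_betw (inv_into A f) B A" using f by (rule bij_betw_inv_into)
next
  fix u v assume u: "u \<in> B" and v: "v \<in> B"
  let ?a = "inv_into A f u" and ?b = "inv_into A f v"
  have a: "?a \<in> A" "f ?a = u" using f u by (auto simp: bij_betw_def inv_into_into f_inv_into_f)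
  have b: "?b \<in> A" "f ?b = v" using f v by (auto simp: bij_betw_def inv_into_into f_inv_into_f)
  have ab: "o1 ?a ?b \<in> A" using r a b unfolding rack_def by blast
  have "f (o1 ?a ?b) = o2 u v" using h a b by metis
  then show "inv_into A f (o2 u v) = o1 ?a ?b"
    using f ab by (metis bij_betw_def inv_into_f_f)
qed


lemma half:
  assumes rC1: "rack C1 c1" and pC1: "perm_rack C1 c1" and cC1: "rack_connected C1 c1"
    and qQ1: "quandle Q1 q1" and cQ1: "rack_connected Q1 q1"
    and pC2: "perm_rack C2 c2" and cC2: "rack_connected C2 c2"
    and qQ2: "quandle Q2 q2" and cQ2: "rack_connected Q2 q2"
    and f: "bij_betw f (C1 \<times> Q1) (C2 \<times> Q2)"
    and hom: "\<forall>p\<in>C1 \<times> Q1. \<forall>p'\<in>C1 \<times> Q1. f (prod_op c1 q1 p p') = prod_op c2 q2 (f p) (f p')"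
  shows "(\<exists>h. h ` C1 = C2 \<and> (\<forall>x\<in>C1. \<forall>a\<in>C1. h (c1 x a) = c2 (h x) (h a)))
       \<and> (\<exists>g. g ` Q1 = Q2 \<and> (\<forall>x\<in>Q1. \<forall>a\<in>Q1. g (q1 x a) = q2 (g x) (g a)))"
proof -
  have rQ1: "rack Q1 q1" using qQ1 unfolding quandle_def by auto
  have id1: "\<And>y. y \<in> Q1 \<Longrightarrow> q1 y y = y" using qQ1 unfolding quandle_def by auto
  have id2: "\<And>y. y \<in> Q2 \<Longrightarrow> q2 y y = y" using qQ2 unfolding quandle_def by auto
  have cl1: "\<And>a b. a \<in> Q1 \<Longrightarrow> b \<in> Q1 \<Longrightarrow> q1 a b \<in> Q1" using rQ1 unfolding rack_def by blast
  have clC1: "\<And>a b. a \<in> C1 \<Longrightarrow> b \<in> C1 \<Longrightarrow> c1 a b \<in> C1" using rC1 unfolding rack_def by blast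
  obtain \<pi>1 where pi1: "bij_betw \<pi>1 C1 C1" "\<forall>a\<in>C1. \<forall>b\<in>C1. c1 a b = \<pi>1 b"
    using pC1 unfolding perm_rack_def by auto
  obtain \<pi>2 where pi2: "bij_betw \<pi>2 C2 C2" "\<forall>a\<in>C2. \<forall>b\<in>C2. c2 a b = \<pi>2 b"
    using pC2 unfolding perm_rack_def by auto
  obtain a0 where a0: "a0 \<in> C1" using cC1 unfolding rack_connected_def by auto
  obtain b0 where b0: "b0 \<in> Q1" using cQ1 unfolding rack_connected_def by auto
  obtain u0 where u0: "u0 \<in> C2" using cC2 unfolding rack_connected_def by auto
  obtain v0 where v0: "v0 \<in> Q2" using cQ2 unfolding rack_connected_def by auto
  have fin: "\<And>a b. a \<in> C1 \<Longrightarrow> b \<in> Q1 \<Longrightarrow> fst (f (a, b)) \<in> C2 \<and> snd (f (a, b)) \<in> Q2"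
    using f unfolding bij_betw_def by (metis image_eqI mem_Sigma_iff prod.collapse)
  have homp: "\<And>a b a' b'. a \<in> C1 \<Longrightarrow> b \<in> Q1 \<Longrightarrow> a' \<in> C1 \<Longrightarrow> b' \<in> Q1 \<Longrightarrow>
      f (c1 a a', q1 b b') = (c2 (fst (f (a, b))) (fst (f (a', b'))), q2 (snd (f (a, b))) (snd (f (a', b'))))"
  proof -
    fix a b a' b' assume "a \<in> C1" "b \<in> Q1" "a' \<in> C1" "b' \<in> Q1"
    then have "f (prod_op c1 q1 (a, b) (a', b')) = prod_op c2 q2 (f (a, b)) (f (a', b'))"
      using hom by blast
    then show "f (c1 a a', q1 b b') = (c2 (fst (f (a, b))) (fst (f (a', b'))), q2 (snd (f (a, b))) (snd (f (a', b'))))"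
      by (simp add: prod_op_def split_beta)
  qed
  have F1: "f (\<pi>1 a, b) = (\<pi>2 (fst (f (a, b))), snd (f (a, b)))" if a: "a \<in> C1" and b: "b \<in> Q1" for a b
  proof -
    have "f (c1 a a, q1 b b) = (c2 (fst (f (a, b))) (fst (f (a, b))), q2 (snd (f (a, b))) (snd (f (a, b))))"
      using homp[OF a b a b] .
    then show ?thesis using pi1 pi2 a b fin[OF a b] id1[OF b] id2 by simp
  qed
  have F2: "snd (f (x, b)) = snd (f (x', b))" if "x \<in> C1" "x' \<in> C1" "b \<in> Q1" for x x' b
    by (rule connected_invariant[OF rC1 cC1 _ that(1,2), where k="\<lambda>x. snd (f (x, b))"])
       (use pi1 F1 that(3) in auto)
  have F3: "fst (f (a, q1 e b)) = fst (f (a, b))" if a: "a \<in> C1" and b: "b \<in> Q1" and e: "e \<in> Q1" for a b e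
  proof -
    define a' where "a' = inv_into C1 \<pi>1 a"
    have a': "a' \<in> C1" "\<pi>1 a' = a" using pi1(1) a unfolding a'_def
      by (auto simp: bij_betw_def inv_into_into f_inv_into_f)
    have "f (c1 a' a', q1 e b) = (c2 (fst (f (a', e))) (fst (f (a', b))), q2 (snd (f (a', e))) (snd (f (a', b))))"
      using homp[OF a'(1) e a'(1) b] .
    then have "fst (f (a, q1 e b)) = \<pi>2 (fst (f (a', b)))"
      using pi1 pi2 a' fin[OF a'(1) e] fin[OF a'(1) b] by simp
    also have "\<dots> = fst (f (a, b))" using F1[OF a'(1) b] a' by simp
    finally show ?thesis .
  qed
  have F4: "fst (f (a, b)) = fst (f (a, b'))" if "a \<in> C1" "b \<in> Q1" "b' \<in> Q1" for a b b'
    by (rule connected_invariant[OF rQ1 cQ1 _ that(2,3), where k="\<lambda>b. fst (f (a, b))"])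
       (use F3 that(1) in auto)
  have part1: "\<exists>h. h ` C1 = C2 \<and> (\<forall>x\<in>C1. \<forall>a\<in>C1. h (c1 x a) = c2 (h x) (h a))"
  proof (intro exI conjI ballI)
    show "(\<lambda>a. fst (f (a, b0))) ` C1 = C2"
    proof
      show "(\<lambda>a. fst (f (a, b0))) ` C1 \<subseteq> C2" using fin b0 by auto
      show "C2 \<subseteq> (\<lambda>a. fst (f (a, b0))) ` C1"
      proof
        fix u assume u: "u \<in> C2"
        then have "(u, v0) \<in> f ` (C1 \<times> Q1)" using f v0 unfolding bij_betw_def by auto
        then obtain a b where ab: "a \<in> C1" "b \<in> Q1" "f (a, b) = (u, v0)" by auto
        then have "fst (f (a, b0)) = u" using F4[OF ab(1) b0 ab(2)] by simp
        then show "u \<in> (\<lambda>a. fst (f (a, b0))) ` C1" using ab(1) by blast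
      qed
    qed
  next
    fix x a assume x: "x \<in> C1" and a: "a \<in> C1"
    show "fst (f (c1 x a, b0)) = c2 (fst (f (x, b0))) (fst (f (a, b0)))"
      using homp[OF x b0 a b0] id1[OF b0] by simp
  qed
  have part2: "\<exists>g. g ` Q1 = Q2 \<and> (\<forall>x\<in>Q1. \<forall>a\<in>Q1. g (q1 x a) = q2 (g x) (g a))"
  proof (intro exI conjI ballI)
    show "(\<lambda>b. snd (f (a0, b))) ` Q1 = Q2"
    proof
      show "(\<lambda>b. snd (f (a0, b))) ` Q1 \<subseteq> Q2" using fin a0 by auto
      show "Q2 \<subseteq> (\<lambda>b. snd (f (a0, b))) ` Q1"
      proof
        fix v assume v: "v \<in> Q2"
        then have "(u0, v) \<in> f ` (C1 \<times> Q1)" using f u0 unfolding bij_betw_def by auto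
        then obtain a b where ab: "a \<in> C1" "b \<in> Q1" "f (a, b) = (u0, v)" by auto
        then have "snd (f (a0, b)) = v" using F2[OF a0 ab(1) ab(2)] by simp
        then show "v \<in> (\<lambda>b. snd (f (a0, b))) ` Q1" using ab(2) by blast
      qed
    qed
  next
    fix x a assume x: "x \<in> Q1" and a: "a \<in> Q1"
    have "snd (f (a0, q1 x a)) = snd (f (c1 a0 a0, q1 x a))"
      using F2[OF a0 clC1[OF a0 a0] cl1[OF x a]] .
    then show "snd (f (a0, q1 x a)) = q2 (snd (f (a0, x))) (snd (f (a0, a)))"
      using homp[OF a0 x a0 a] by simp
  qed
  show ?thesis using part1 part2 by blast
qed


lemma surj_both_bij:
  assumes "finite A" "finite B" "h ` A = B" "h' ` B = A"
  shows "bij_betw h A B"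
proof -
  have "card B \<le> card A" using assms(1,3) card_image_le by blast
  moreover have "card A \<le> card B" using assms(2,4) card_image_le by blast
  ultimately have "inj_on h A" using assms(1,3) by (metis eq_card_imp_inj_on le_antisym)
  then show ?thesis using assms(3) by (simp add: bij_betw_def)
qed

theorem theorem7p11:
  fixes C1 :: "'a set" and c1 :: "'a \<Rightarrow> 'a \<Rightarrow> 'a"
    and Q1 :: "'b set" and q1 :: "'b \<Rightarrow> 'b \<Rightarrow> 'b"
    and C2 :: "'c set" and c2 :: "'c \<Rightarrow> 'c \<Rightarrow> 'c"
    and Q2 :: "'d set" and q2 :: "'d \<Rightarrow> 'd \<Rightarrow> 'd"
  assumes "finite C1" "rack C1 c1" "perm_rack C1 c1" "rack_connected C1 c1"
      and "finite Q1" "quandle Q1 q1" "rack_connected Q1 q1"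
      and "finite C2" "rack C2 c2" "perm_rack C2 c2" "rack_connected C2 c2"
      and "finite Q2" "quandle Q2 q2" "rack_connected Q2 q2"
  shows "finite (C1 \<times> Q1) \<and> rack (C1 \<times> Q1) (prod_op c1 q1)
           \<and> rack_connected (C1 \<times> Q1) (prod_op c1 q1)
         \<and> (rack_iso (C1 \<times> Q1) (prod_op c1 q1) (C2 \<times> Q2) (prod_op c2 q2)
              \<longleftrightarrow> rack_iso C1 c1 C2 c2 \<and> rack_iso Q1 q1 Q2 q2)"
proof -
  have rQ1: "rack Q1 q1" using assms(6) unfolding quandle_def by auto
  have rQ2: "rack Q2 q2" using assms(13) unfolding quandle_def by auto
  have r1: "rack (C1 \<times> Q1) (prod_op c1 q1)" using prod_rack[OF assms(2) rQ1] .
  have r2: "rack (C2 \<times> Q2) (prod_op c2 q2)" using prod_rack[OF assms(9) rQ2] .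
  have con: "rack_connected (C1 \<times> Q1) (prod_op c1 q1)"
    using prod_connected[OF assms(2,3,4,6,7)] .
  have iff: "rack_iso (C1 \<times> Q1) (prod_op c1 q1) (C2 \<times> Q2) (prod_op c2 q2)
              \<longleftrightarrow> rack_iso C1 c1 C2 c2 \<and> rack_iso Q1 q1 Q2 q2"
  proof
    assume "rack_iso (C1 \<times> Q1) (prod_op c1 q1) (C2 \<times> Q2) (prod_op c2 q2)"
    then obtain f where f: "bij_betw f (C1 \<times> Q1) (C2 \<times> Q2)"
      "\<forall>p\<in>C1 \<times> Q1. \<forall>p'\<in>C1 \<times> Q1. f (prod_op c1 q1 p p') = prod_op c2 q2 (f p) (f p')"
      unfolding rack_iso_def by blast
    obtain h g where hg: "h ` C1 = C2" "\<forall>x\<in>C1. \<forall>a\<in>C1. h (c1 x a) = c2 (h x) (h a)"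
      "g ` Q1 = Q2" "\<forall>x\<in>Q1. \<forall>a\<in>Q1. g (q1 x a) = q2 (g x) (g a)"
      using half[OF assms(2,3,4,6,7,10,11,13,14) f] by blast
    have fi: "bij_betw (inv_into (C1 \<times> Q1) f) (C2 \<times> Q2) (C1 \<times> Q1)"
      "\<forall>u\<in>C2 \<times> Q2. \<forall>v\<in>C2 \<times> Q2. inv_into (C1 \<times> Q1) f (prod_op c2 q2 u v)
         = prod_op c1 q1 (inv_into (C1 \<times> Q1) f u) (inv_into (C1 \<times> Q1) f v)"
      using iso_inv[OF r1 f] by blast+
    obtain h' g' where hg': "h' ` C2 = C1" "g' ` Q2 = Q1"
      using half[OF assms(9,10,11,13,14,3,4,6,7) fi] by blast
    have "bij_betw h C1 C2" using surj_both_bij[OF assms(1,8) hg(1) hg'(1)] .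
    moreover have "bij_betw g Q1 Q2" using surj_both_bij[OF assms(5,12) hg(3) hg'(2)] .
    ultimately show "rack_iso C1 c1 C2 c2 \<and> rack_iso Q1 q1 Q2 q2"
      unfolding rack_iso_def using hg by blast
  next
    assume "rack_iso C1 c1 C2 c2 \<and> rack_iso Q1 q1 Q2 q2"
    then obtain f1 f2 where f1: "bij_betw f1 C1 C2" "\<forall>a\<in>C1. \<forall>b\<in>C1. f1 (c1 a b) = c2 (f1 a) (f1 b)"
      and f2: "bij_betw f2 Q1 Q2" "\<forall>a\<in>Q1. \<forall>b\<in>Q1. f2 (q1 a b) = q2 (f2 a) (f2 b)"
      unfolding rack_iso_def by blast
    have "bij_betw (map_prod f1 f2) (C1 \<times> Q1) (C2 \<times> Q2)" using f1(1) f2(1) by (rule bij_betw_map_prod)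
    moreover have "\<forall>p\<in>C1 \<times> Q1. \<forall>p'\<in>C1 \<times> Q1. map_prod f1 f2 (prod_op c1 q1 p p')
        = prod_op c2 q2 (map_prod f1 f2 p) (map_prod f1 f2 p')"
    proof (intro ballI)
      fix p p' assume "p \<in> C1 \<times> Q1" "p' \<in> C1 \<times> Q1"
      then show "map_prod f1 f2 (prod_op c1 q1 p p') = prod_op c2 q2 (map_prod f1 f2 p) (map_prod f1 f2 p')"
        using f1(2) f2(2) by (cases p, cases p') simp
    qed
    ultimately show "rack_iso (C1 \<times> Q1) (prod_op c1 q1) (C2 \<times> Q2) (prod_op c2 q2)"
      unfolding rack_iso_def by blast
  qed
  show ?thesis using assms(1,5) r1 con iff by simp
qed

end
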